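(* Let $F\in\Gamma_0^s(\mathbb{R}_+)$ and $a\in(0,1]$. If $(\hat F)^a$ satisfies the triangle inequality on $[0,+\infty)$, i.e. $\hat F^a(r,t)\le \hat F^a(r,s)+\hat F^a(s,t)$ for all $r,s,t\ge0$, then $T_a(F)(s)\ge F(s)$ for every $s\ge 0$.
   Context: $\Gamma_0(\mathbb{R}_+)$ is the set of functions $F:[0,\infty)\to[0,\infty]$ that are convex, lower semicontinuous, with $F(1)=0$. For $F\in\Gamma_0(\mathbb{R}_+)$: $\mathrm{rec}(F)(r)=\lim_{\alpha\to\infty}F(1+\alpha r)/\alpha$, $F'_\infty:=\mathrm{rec}(F)(1)$; the perspective function is $\hat F(r,t)=tF(r/t)$ for $t>0$, $\hat F(r,0)=\mathrm{rec}(F)(r)$; the reverse entropy is $R(s)=sF(1/s)$ for $s>0$, $R(0)=F'_\infty$. $\Gamma_0^s(\mathbb{R}_+)$ is the set of $F\in\Gamma_0(\mathbb{R}_+)$ with $F=R$; for such $F$, $\hat F(r,t)=\hat F(t,r)$ and $\hat F(1,t)=F(t)$. The marginal perspective function $H_F$ is the lower semicontinuous envelope of $\tilde H_F(r_1,r_2)=\inf_{\theta>0}[\hat F(\theta,r_1)+\hat F(\theta,r_2)]$. For $a\in(0,1]$, $T_a:\Gamma_0(\mathbb{R}_+)\to\Gamma_0^s(\mathbb{R}_+)$ is $T_a(F)(s)=2^{1/a-1}H_F(1,s)$. *)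

theory Defs
  imports "HOL-Analysis.Analysis"
begin

text \<open>Functions F : [0,\<infinity>) \<rightarrow> [0,\<infinity>] are modelled as real \<Rightarrow> ereal; only values on {0..} matter.\<close>

definition econvex_on :: "'a::real_vector set \<Rightarrow> ('a \<Rightarrow> ereal) \<Rightarrow> bool" where
  "econvex_on S f \<longleftrightarrow> (\<forall>x\<in>S. \<forall>y\<in>S. \<forall>u::real. 0 \<le> u \<and> u \<le> 1 \<longrightarrow>
      f ((1 - u) *\<^sub>R x + u *\<^sub>R y) \<le> ereal (1 - u) * f x + ereal u * f y)"

definition lsc_on :: "'a::topological_space set \<Rightarrow> ('a \<Rightarrow> ereal) \<Rightarrow> bool" where
  "lsc_on S f \<longleftrightarrow> (\<forall>x\<in>S. \<forall>c. c < f x \<longrightarrow> eventually (\<lambda>y. c < f y) (at x within S))"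

definition Gamma0 :: "(real \<Rightarrow> ereal) set" where
  "Gamma0 = {F. (\<forall>x\<ge>0. 0 \<le> F x) \<and> econvex_on {0..} F \<and> lsc_on {0..} F \<and> F 1 = 0}"

definition recF :: "(real \<Rightarrow> ereal) \<Rightarrow> real \<Rightarrow> ereal" where
  "recF F r = Lim at_top (\<lambda>\<alpha>::real. F (1 + \<alpha> * r) / ereal \<alpha>)"

definition Finf :: "(real \<Rightarrow> ereal) \<Rightarrow> ereal" where
  "Finf F = recF F 1"

definition persp :: "(real \<Rightarrow> ereal) \<Rightarrow> real \<Rightarrow> real \<Rightarrow> ereal" where
  "persp F r t = (if t > 0 then ereal t * F (r / t) else recF F r)"

definition reverse_entropy :: "(real \<Rightarrow> ereal) \<Rightarrow> real \<Rightarrow> ereal" where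
  "reverse_entropy F s = (if s > 0 then ereal s * F (1 / s) else Finf F)"

definition Gamma0s :: "(real \<Rightarrow> ereal) set" where
  "Gamma0s = {F \<in> Gamma0. \<forall>s\<ge>0. F s = reverse_entropy F s}"

definition tildeH :: "(real \<Rightarrow> ereal) \<Rightarrow> real \<times> real \<Rightarrow> ereal" where
  "tildeH F p = (INF \<theta>\<in>{0<..}. persp F \<theta> (fst p) + persp F \<theta> (snd p))"

definition lsc_envelope :: "'a::topological_space set \<Rightarrow> ('a \<Rightarrow> ereal) \<Rightarrow> 'a \<Rightarrow> ereal" where
  "lsc_envelope S f x = (SUP g\<in>{g. lsc_on S g \<and> (\<forall>y\<in>S. g y \<le> f y)}. g x)"

definition HF :: "(real \<Rightarrow> ereal) \<Rightarrow> real \<Rightarrow> real \<Rightarrow> ereal" where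
  "HF F r1 r2 = lsc_envelope ({0..} \<times> {0..}) (tildeH F) (r1, r2)"

definition epowr :: "ereal \<Rightarrow> real \<Rightarrow> ereal" where
  "epowr x a = (if x = \<infinity> then \<infinity> else ereal (real_of_ereal x powr a))"

definition Ta :: "real \<Rightarrow> (real \<Rightarrow> ereal) \<Rightarrow> real \<Rightarrow> ereal" where
  "Ta a F s = ereal (2 powr (1 / a - 1)) * HF F 1 s"

end

theory Submission
  imports Defs
begin
lemma young_aux:
  fixes x m a :: real
  assumes "0 < a" "a \<le> 1" "0 \<le> x" "0 < m"
  shows "x powr a * m powr (1 - a) \<le> a * x + (1 - a) * m"
proof (cases "x = 0")
  case True thus ?thesis using assms by simp
next
  case False
  then show ?thesis using Youngs_inequality_0[of a "1-a" x m] assms by simp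
qed

lemma real_main:
  fixes p x y a :: real
  assumes a: "0 < a" "a \<le> 1" and nn: "0 \<le> p" "0 \<le> x" "0 \<le> y"
    and h: "p powr a \<le> x powr a + y powr a"
  shows "2 powr (1 - 1/a) * p \<le> x + y"
proof (cases "x + y = 0")
  case True
  then have "x = 0" "y = 0" using nn by auto
  then have "p powr a \<le> 0" using h by simp
  then have "p = 0" using nn by (smt (verit) powr_gt_zero)
  then show ?thesis using True by simp
next
  case False
  define m where "m = (x + y) / 2"
  have m: "m > 0" using False nn m_def by auto
  have "x powr a * m powr (1 - a) + y powr a * m powr (1 - a) \<le> 2 * m"
  proof -
    have 1: "x powr a * m powr (1 - a) \<le> a * x + (1 - a) * m" by (rule young_aux[OF a nn(2) m])
    have 2: "y powr a * m powr (1 - a) \<le> a * y + (1 - a) * m" by (rule young_aux[OF a nn(3) m])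
    have "a * x + (1 - a) * m + (a * y + (1 - a) * m) = 2 * m" unfolding m_def by (simp add: algebra_simps)
    with 1 2 show ?thesis by linarith
  qed
  then have "(x powr a + y powr a) * m powr (1 - a) \<le> 2 * m" by (simp add: algebra_simps)
  moreover have "m powr (1 - a) = m / m powr a" using m by (simp add: powr_diff)
  ultimately have "m * (x powr a + y powr a) \<le> m * (2 * m powr a)" using m
    by (simp add: field_simps)
  then have "(x powr a + y powr a) \<le> 2 * m powr a" using m by simp
  with h have "p powr a \<le> 2 * m powr a" by simp
  then have "(p powr a) powr (1/a) \<le> (2 * m powr a) powr (1/a)"
    using a nn by (intro powr_mono2) auto
  also have "(2 * m powr a) powr (1/a) = 2 powr (1/a) * m"
    using a m by (simp add: powr_mult powr_powr)
  finally have "p \<le> 2 powr (1/a) * m" using a nn by (simp add: powr_powr)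
  then have "2 powr (1 - 1/a) * p \<le> 2 powr (1 - 1/a) * (2 powr (1/a) * m)" by simp
  also have "\<dots> = 2 * m" by (simp add: powr_diff)
  finally show ?thesis using m_def by simp
qed
lemma ereal_main:
  fixes P A B :: ereal and a :: real
  assumes a: "0 < a" "a \<le> 1" and nn: "0 \<le> P" "0 \<le> A" "0 \<le> B"
    and h: "epowr P a \<le> epowr A a + epowr B a"
  shows "ereal (2 powr (1 - 1/a)) * P \<le> A + B"
proof (cases "A = \<infinity> \<or> B = \<infinity>")
  case True thus ?thesis using nn by auto
next
  case False
  then obtain x y where xy: "A = ereal x" "B = ereal y" using nn by (cases A; cases B) auto
  have "P \<noteq> \<infinity>" using h xy unfolding epowr_def by auto
  then obtain p where p: "P = ereal p" using nn by (cases P) auto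
  have "p powr a \<le> x powr a + y powr a" using h xy p unfolding epowr_def by auto
  from real_main[OF a _ _ _ this] show ?thesis using nn xy p by simp
qed

lemma em: "ereal a * (ereal b * X) = ereal (a * b) * X"
  by (metis mult.assoc times_ereal.simps(1))

lemma lsc_open:
  assumes "lsc_on S f" "x \<in> S" "c < f x"
  shows "\<exists>T. open T \<and> x \<in> T \<and> (\<forall>y\<in>T. y \<in> S \<longrightarrow> c < f y)"
proof -
  from assms have "eventually (\<lambda>y. c < f y) (at x within S)" unfolding lsc_on_def by blast
  then obtain T where "open T" "x \<in> T" "\<forall>y\<in>T. y \<noteq> x \<longrightarrow> y \<in> S \<longrightarrow> c < f y"
    unfolding eventually_at_topological by blast
  thus ?thesis using assms(3) by metis
qed

lemma lsc_openI:
  assumes "\<And>x c. x \<in> S \<Longrightarrow> c < f x \<Longrightarrow> \<exists>T. open T \<and> x \<in> T \<and> (\<forall>y\<in>T. y \<in> S \<longrightarrow> c < f y)"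
  shows "lsc_on S f"
  unfolding lsc_on_def eventually_at_topological using assms by metis

context
  fixes F :: "real \<Rightarrow> ereal"
  assumes FG: "F \<in> Gamma0s"
begin

lemma F_nn: "x \<ge> 0 \<Longrightarrow> F x \<ge> 0" using FG unfolding Gamma0s_def Gamma0_def by auto

lemma F_re: "\<forall>s\<ge>0. F s = reverse_entropy F s"
  using FG unfolding Gamma0s_def by blast

lemma F_sym: assumes "x > 0" shows "F x = ereal x * F (1/x)"
proof -
  have "F x = reverse_entropy F x" using F_re assms by simp
  then show ?thesis using assms unfolding reverse_entropy_def by (simp only: if_True)
qed

lemma F_zero: "F 0 = recF F 1"
proof -
  have "F 0 = reverse_entropy F 0" using F_re by simp
  then show ?thesis unfolding reverse_entropy_def Finf_def by simp
qed

lemma F_one: "F 1 = 0" using FG unfolding Gamma0s_def Gamma0_def by auto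

lemma F_lsc: "lsc_on {0..} F" using FG unfolding Gamma0s_def Gamma0_def by auto

lemma F_conv: assumes "0 \<le> u" "u \<le> 1" shows "F u \<le> ereal (1 - u) * F 0"
proof -
  have "econvex_on {0..} F" using FG unfolding Gamma0s_def Gamma0_def by auto
  then have "F ((1 - u) *\<^sub>R 0 + u *\<^sub>R 1) \<le> ereal (1 - u) * F 0 + ereal u * F 1"
    unfolding econvex_on_def using assms by (meson atLeast_iff order_refl zero_le_one)
  thus ?thesis using F_one by simp
qed

lemma F_cont0: "(F \<longlongrightarrow> F 0) (at_right 0)"
proof (rule order_tendstoI)
  fix c assume c: "c < F 0"
  obtain T where T: "open T" "0 \<in> T" "\<forall>y\<in>T. y \<in> {0..} \<longrightarrow> c < F y"
    using lsc_open[OF F_lsc _ c] by auto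
  have "eventually (\<lambda>y. y \<in> T) (at_right (0::real))"
    unfolding eventually_at_topological using T(1,2) by blast
  moreover have "eventually (\<lambda>y. y > 0) (at_right (0::real))" by (simp add: eventually_at_right_less)
  ultimately show "eventually (\<lambda>y. c < F y) (at_right 0)"
    by eventually_elim (use T in auto)
next
  fix c assume c: "F 0 < c"
  then obtain f0 where f0: "F 0 = ereal f0" using F_nn[of 0] by (cases "F 0") auto
  have "eventually (\<lambda>y. y > 0) (at_right (0::real))" by (simp add: eventually_at_right_less)
  moreover have "eventually (\<lambda>y. y < 1) (at_right (0::real))"
    using eventually_at_right_real[of 0 "1::real"] by (rule eventually_mono) auto
  ultimately show "eventually (\<lambda>y. F y < c) (at_right 0)"
  proof eventually_elim
    case (elim u)
    have "F u \<le> ereal (1 - u) * F 0" using F_conv[of u] elim by auto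
    also have "\<dots> \<le> F 0" using f0 F_nn[of 0] elim by (simp add: mult_left_le_one_le)
    finally show ?case using c by simp
  qed
qed

lemma recF_pos: assumes r: "r > 0" shows "recF F r = ereal r * F 0"
proof -
  have ev: "eventually (\<lambda>\<alpha>::real. ereal ((1 + \<alpha> * r) / \<alpha>) * F (1 / (1 + \<alpha> * r)) = F (1 + \<alpha> * r) / ereal \<alpha>) at_top"
    using eventually_gt_at_top[of 0]
  proof eventually_elim
    case (elim \<alpha>)
    have pos: "1 + \<alpha> * r > 0" using elim r by (simp add: add_pos_pos)
    have "F (1 + \<alpha> * r) / ereal \<alpha> = ereal (1 + \<alpha> * r) * F (1 / (1 + \<alpha> * r)) * ereal (1 / \<alpha>)"
      using F_sym[OF pos] elim by (simp add: divide_ereal_def inverse_eq_divide)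
    also have "\<dots> = (ereal (1 / \<alpha>) * ereal (1 + \<alpha> * r)) * F (1 / (1 + \<alpha> * r))"
      by (simp only: mult_ac)
    also have "ereal (1 / \<alpha>) * ereal (1 + \<alpha> * r) = ereal ((1 + \<alpha> * r) / \<alpha>)"
      by simp
    finally have "F (1 + \<alpha> * r) / ereal \<alpha> = ereal ((1 + \<alpha> * r) / \<alpha>) * F (1 / (1 + \<alpha> * r))" .
    then show ?case by simp
  qed
  have l1: "((\<lambda>\<alpha>::real. (1 + \<alpha> * r) / \<alpha>) \<longlongrightarrow> r) at_top"
  proof -
    have "((\<lambda>\<alpha>::real. inverse \<alpha> + r) \<longlongrightarrow> 0 + r) at_top"
      by (intro tendsto_intros tendsto_inverse_0_at_top filterlim_ident)
    moreover have "eventually (\<lambda>\<alpha>::real. inverse \<alpha> + r = (1 + \<alpha> * r) / \<alpha>) at_top"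
      using eventually_gt_at_top[of 0] by eventually_elim (simp add: field_simps)
    ultimately show ?thesis using tendsto_cong by fastforce
  qed
  have top: "filterlim (\<lambda>\<alpha>::real. 1 + \<alpha> * r) at_top at_top"
    by (rule filterlim_tendsto_add_at_top[OF tendsto_const])
       (rule filterlim_tendsto_pos_mult_at_top[OF tendsto_const r filterlim_ident, THEN filterlim_cong[THEN iffD1, rotated 3]]; auto simp: mult.commute)
  have l2: "filterlim (\<lambda>\<alpha>::real. 1 / (1 + \<alpha> * r)) (at_right 0) at_top"
  proof (rule tendsto_imp_filterlim_at_right)
    show "((\<lambda>\<alpha>::real. 1 / (1 + \<alpha> * r)) \<longlongrightarrow> 0) at_top"
      using tendsto_inverse_0_at_top[OF top] by (simp add: inverse_eq_divide)
    show "eventually (\<lambda>\<alpha>::real. 1 / (1 + \<alpha> * r) > 0) at_top"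
      using eventually_gt_at_top[of 0] by eventually_elim (use r in \<open>auto intro: add_pos_nonneg\<close>)
  qed
  have "((\<lambda>\<alpha>::real. ereal ((1 + \<alpha> * r) / \<alpha>) * F (1 / (1 + \<alpha> * r))) \<longlongrightarrow> ereal r * F 0) at_top"
    apply (rule tendsto_mult_ereal)
      apply (rule tendsto_ereal[OF l1])
     apply (rule filterlim_compose[OF F_cont0 l2])
    using r by auto
  then have "((\<lambda>\<alpha>::real. F (1 + \<alpha> * r) / ereal \<alpha>) \<longlongrightarrow> ereal r * F 0) at_top"
    using ev tendsto_cong by fastforce
  then show ?thesis unfolding recF_def by (rule tendsto_Lim[rotated]) simp
qed

lemma persp_pos: assumes "r1 > 0" "r2 \<ge> 0" shows "persp F r1 r2 = ereal r1 * F (r2 / r1)"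
proof (cases "r2 > 0")
  case True
  have "F (r1 / r2) = ereal (r1 / r2) * F (r2 / r1)" using F_sym[of "r1/r2"] assms True by simp
  have "persp F r1 r2 = ereal r2 * F (r1 / r2)" using True unfolding persp_def by simp
  also have "\<dots> = ereal r2 * (ereal (r1 / r2) * F (r2 / r1))" using \<open>F (r1 / r2) = _\<close> by simp
  also have "\<dots> = (ereal r2 * ereal (r1 / r2)) * F (r2 / r1)" by (simp only: mult.assoc)
  also have "ereal r2 * ereal (r1 / r2) = ereal r1" using True by simp
  finally show ?thesis .
next
  case False
  then have "r2 = 0" using assms by simp
  then show ?thesis using recF_pos[OF assms(1)] unfolding persp_def by simp
qed

end

theorem mainTheorem3:
  fixes F :: "real \<Rightarrow> ereal" and a :: real
  assumes "F \<in> Gamma0s"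
    and "0 < a" and "a \<le> 1"
    and "\<forall>r\<ge>0. \<forall>s\<ge>0. \<forall>t\<ge>0.
           epowr (persp F r t) a \<le> epowr (persp F r s) a + epowr (persp F s t) a"
  shows "\<forall>s\<ge>0. Ta a F s \<ge> F s"
proof (intro allI impI)
  fix s :: real assume s: "s \<ge> 0"
  note FG = assms(1)
  define C where "C = 2 powr (1 - 1/a)"
  have C: "C > 0" unfolding C_def by simp
  define S where "S = ({0..} \<times> {0..} :: (real \<times> real) set)"
  define g where "g p = (if fst p > 0 then ereal C * (ereal (fst p) * F (snd p / fst p)) else 0)" for p
  have g_nn: "g p \<ge> 0" if "p \<in> S" for p
    using that F_nn[OF FG] C unfolding g_def S_def by (auto simp: mult_nonneg_nonneg)
  have pnn: "persp F \<theta> t \<ge> 0" if "\<theta> > 0" "t \<ge> 0" for \<theta> t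
    using persp_pos[OF FG that] F_nn[OF FG, of "t/\<theta>"] that by (simp add: mult_nonneg_nonneg)
  have g_le: "g p \<le> tildeH F p" if p: "p \<in> S" for p
    unfolding tildeH_def
  proof (rule INF_greatest)
    fix \<theta> :: real assume th: "\<theta> \<in> {0<..}"
    obtain r1 r2 where rr: "p = (r1, r2)" "r1 \<ge> 0" "r2 \<ge> 0" using p unfolding S_def by auto
    show "g p \<le> persp F \<theta> (fst p) + persp F \<theta> (snd p)"
    proof (cases "r1 > 0")
      case False
      then show ?thesis using rr th pnn unfolding g_def by (simp add: add_nonneg_nonneg)
    next
      case True
      have tri: "epowr (persp F r1 r2) a \<le> epowr (persp F r1 \<theta>) a + epowr (persp F \<theta> r2) a"
        using assms(4) rr th by auto
      have eq: "persp F r1 \<theta> = persp F \<theta> r1"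
        using persp_pos[OF FG True, of \<theta>] th True unfolding persp_def by simp
      have "ereal C * persp F r1 r2 \<le> persp F \<theta> r1 + persp F \<theta> r2"
        unfolding C_def
        by (rule ereal_main[OF assms(2,3)]) (use tri eq pnn True rr th in auto)
      then show ?thesis using persp_pos[OF FG True rr(3)] rr True unfolding g_def by simp
    qed
  qed
  have g_lsc: "lsc_on S g"
  proof (rule lsc_openI)
    fix x c assume x: "x \<in> S" and c: "c < g x"
    show "\<exists>T. open T \<and> x \<in> T \<and> (\<forall>y\<in>T. y \<in> S \<longrightarrow> c < g y)"
    proof (cases "c < 0")
      case True
      then show ?thesis using g_nn by (intro exI[of _ UNIV]) (auto intro: less_le_trans)
    next
      case False
      obtain x1 x2 where xx: "x = (x1, x2)" "x1 \<ge> 0" "x2 \<ge> 0" using x unfolding S_def by auto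
      have x1: "x1 > 0" using c False xx unfolding g_def by (auto split: if_splits)
      have "c \<noteq> \<infinity>" using c by auto
      then obtain c0 where c0: "c = ereal c0" "c0 \<ge> 0" using False by (cases c) auto
      have "ereal (c0 / (C * x1)) < F (x2 / x1)"
      proof (rule ccontr)
        assume "\<not> ?thesis"
        then have "F (x2/x1) \<le> ereal (c0 / (C * x1))" by simp
        then have "ereal (C * x1) * F (x2/x1) \<le> ereal (C * x1) * ereal (c0 / (C * x1))"
          using C x1 by (intro ereal_mult_left_mono) auto
        then have "g x \<le> c" using C x1 c0 xx unfolding g_def by (simp add: em)
        then show False using c by simp
      qed
      then obtain b where b: "ereal (c0 / (C * x1)) < ereal b" "ereal b < F (x2 / x1)"
        using ereal_dense2 by blast
      have lt: "c0 / (C * x1) < b" using b by simp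
      have "c0 / (C * x1) \<ge> 0" using c0 C x1 by simp
      then have bpos: "b > 0" using lt by linarith
      from lt have m: "c0 / (C * b) < x1" using C bpos x1 by (simp add: field_simps)
      obtain U where U: "open U" "x2 / x1 \<in> U" "\<forall>u\<in>U. u \<in> {0..} \<longrightarrow> ereal b < F u"
      proof -
        have "x2 / x1 \<in> {0..}" using xx x1 by simp
        from lsc_open[OF F_lsc[OF FG] this b(2)] show ?thesis using that by blast
      qed
      define T where "T = {y::real\<times>real. fst y > c0 / (C * b)} \<inter> ((\<lambda>y. snd y / fst y) -` U \<inter> {y. fst y > 0})"
      have o1: "open {y::real\<times>real. fst y > c0 / (C * b)}"
        by (intro open_Collect_less continuous_intros)
      have o2: "open ((\<lambda>y::real\<times>real. snd y / fst y) -` U \<inter> {y. fst y > 0})"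
      proof -
        have op: "open {y::real\<times>real. fst y > 0}" by (intro open_Collect_less continuous_intros)
        have "continuous_on {y::real\<times>real. fst y > 0} (\<lambda>y. snd y / fst y)"
          by (intro continuous_intros) auto
        then show ?thesis using continuous_on_open_vimage[OF op] U(1) by blast
      qed
      have "open T" unfolding T_def using o1 o2 by auto
      moreover have "x \<in> T" unfolding T_def using xx x1 m U(2) by auto
      moreover have "\<forall>y\<in>T. y \<in> S \<longrightarrow> c < g y"
      proof (intro ballI impI)
        fix y assume yT: "y \<in> T" and yS: "y \<in> S"
        have y1: "fst y > 0" "fst y > c0 / (C * b)" using yT unfolding T_def by auto
        have "snd y / fst y \<ge> 0" using yS y1 unfolding S_def by auto
        then have Fb: "ereal b < F (snd y / fst y)" using U yT unfolding T_def by auto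
        have cl: "c0 < C * fst y * b" using y1 C bpos by (simp add: field_simps)
        have "ereal (C * fst y) * ereal b \<le> ereal (C * fst y) * F (snd y / fst y)"
          using Fb C y1 by (intro ereal_mult_left_mono) auto
        then have "ereal (C * fst y * b) \<le> g y" using y1 unfolding g_def by (simp add: em)
        moreover have "ereal c0 < ereal (C * fst y * b)" using cl by simp
        ultimately show "c < g y" using c0 by (metis less_le_trans)
      qed
      ultimately show ?thesis by blast
    qed
  qed
  have "g (1, s) \<le> HF F 1 s"
    unfolding HF_def lsc_envelope_def S_def[symmetric]
    by (rule SUP_upper) (use g_lsc g_le in auto)
  moreover have "g (1, s) = ereal C * F s" unfolding g_def by simp
  ultimately have "ereal (2 powr (1 / a - 1)) * (ereal C * F s) \<le> Ta a F s"
    unfolding Ta_def by (intro ereal_mult_left_mono) auto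
  moreover have "2 powr (1 / a - 1) * C = 1" unfolding C_def by (simp add: powr_add[symmetric])
  ultimately show "F s \<le> Ta a F s" by (simp add: mult.assoc[symmetric])
qed

end
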